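(* Let $\mathcal{X}$ and $\mathcal{Y}$ be finite additive groups, $n,m\ge1$, and let $F:\mathcal{X}^n\to\mathcal{Y}^m$ be a random linear code, i.e. a random variable taking values in the set of group homomorphisms $\mathcal{X}^n\to\mathcal{Y}^m$. Let $\Sigma_n,\Sigma_m$ be uniformly distributed random permutations of the coordinates of $\mathcal{X}^n$ and $\mathcal{Y}^m$ respectively, let $\bar Y^m$ be a uniformly distributed random vector on $\mathcal{Y}^m$, with $F,\Sigma_n,\Sigma_m,\bar Y^m$ mutually independent, and define $\hat F(\mathbf{x})=\Sigma_m(F(\Sigma_n(\mathbf{x})))+\bar Y^m$. Then for all $\mathbf{x}_1\neq\mathbf{x}_2$ in $\mathcal{X}^n$ and all $\mathbf{y}_1,\mathbf{y}_2\in\mathcal{Y}^m$, $$\Pr\{\hat F(\mathbf{x}_1)=\mathbf{y}_1\}=|\mathcal{Y}|^{-m},$$ $$\Pr\{\hat F(\mathbf{x}_2)=\mathbf{y}_2\mid \hat F(\mathbf{x}_1)=\mathbf{y}_1\}=|\mathcal{Y}|^{-m}\,\alpha(F)(P_{\mathbf{x}_2-\mathbf{x}_1},P_{\mathbf{y}_2-\mathbf{y}_1}).$$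
   Context: For a sequence $\mathbf{x}\in\mathcal{X}^n$, its type $P_{\mathbf{x}}$ is the distribution on $\mathcal{X}$ given by $P_{\mathbf{x}}(a)=N(a|\mathbf{x})/n$, where $N(a|\mathbf{x})$ is the number of occurrences of $a$ in $\mathbf{x}$; $\mathcal{P}_n(\mathcal{X})$ is the set of types of sequences in $\mathcal{X}^n$ (similarly for $\mathcal{Y}^m$). A permutation of coordinates acts on $\mathcal{X}^n$ by permuting entries. For a map $f:\mathcal{X}^n\to\mathcal{Y}^m$, its joint spectrum is $S_{\mathcal{X}\mathcal{Y}}(f)(P,Q)=|\{\mathbf{x}\in\mathcal{X}^n: P_{\mathbf{x}}=P,\ P_{f(\mathbf{x})}=Q\}|/|\mathcal{X}|^n$. For $P\in\mathcal{P}_n(\mathcal{X})$, $Q\in\mathcal{P}_m(\mathcal{Y})$, with $\binom{n}{nP}=n!/\prod_{a}(nP(a))!$ and $\binom{m}{mQ}=m!/\prod_{b}(mQ(b))!$, define for a random map $F$ $$\alpha(F)(P,Q)=\frac{E[S_{\mathcal{X}\mathcal{Y}}(F)(P,Q)]}{\binom{n}{nP}\binom{m}{mQ}\,|\mathcal{X}|^{-n}|\mathcal{Y}|^{-m}}.$$ *)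

theory Defs
  imports "HOL-Probability.Probability" "HOL-Library.Function_Algebras"
begin

text \<open>Sequences in X^n are functions 'n \<Rightarrow> 'x with a finite index type 'n (|'n| = n).\<close>

definition seq_type :: "('n::finite \<Rightarrow> 'x) \<Rightarrow> ('x \<Rightarrow> real)" where
  "seq_type x = (\<lambda>a. real (card {i. x i = a}) / real CARD('n))"

definition multinom :: "nat \<Rightarrow> ('x::finite \<Rightarrow> real) \<Rightarrow> real" where
  "multinom n P = fact n / (\<Prod>a\<in>UNIV. fact (nat (round (real n * P a))))"

definition joint_spectrum ::
  "(('n::finite \<Rightarrow> 'x::finite) \<Rightarrow> ('m::finite \<Rightarrow> 'y)) \<Rightarrow> ('x \<Rightarrow> real) \<Rightarrow> ('y \<Rightarrow> real) \<Rightarrow> real" where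
  "joint_spectrum f P Q =
     real (card {x :: 'n \<Rightarrow> 'x. seq_type x = P \<and> seq_type (f x) = Q}) / real CARD('x) ^ CARD('n)"

definition alpha ::
  "(('n::finite \<Rightarrow> 'x::finite) \<Rightarrow> ('m::finite \<Rightarrow> 'y::finite)) pmf \<Rightarrow> ('x \<Rightarrow> real) \<Rightarrow> ('y \<Rightarrow> real) \<Rightarrow> real" where
  "alpha F P Q =
     measure_pmf.expectation F (\<lambda>f. joint_spectrum f P Q) /
     (multinom CARD('n) P * multinom CARD('m) Q
        * inverse (real CARD('x) ^ CARD('n)) * inverse (real CARD('y) ^ CARD('m)))"

definition is_additive_hom :: "('a::ab_group_add \<Rightarrow> 'b::ab_group_add) \<Rightarrow> bool" where
  "is_additive_hom f \<longleftrightarrow> (\<forall>u v. f (u + v) = f u + f v)"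

definition randomize ::
  "(('n::finite \<Rightarrow> 'x) \<Rightarrow> ('m::finite \<Rightarrow> 'y::{finite,ab_group_add})) pmf
     \<Rightarrow> (('n \<Rightarrow> 'x) \<Rightarrow> ('m \<Rightarrow> 'y)) pmf" where
  "randomize F =
     bind_pmf F (\<lambda>f.
     bind_pmf (pmf_of_set {p :: 'n \<Rightarrow> 'n. p permutes UNIV}) (\<lambda>sg.
     bind_pmf (pmf_of_set {p :: 'm \<Rightarrow> 'm. p permutes UNIV}) (\<lambda>tu.
     bind_pmf (pmf_of_set (UNIV :: ('m \<Rightarrow> 'y) set)) (\<lambda>ybar.
       return_pmf (\<lambda>x. ((f (x \<circ> sg)) \<circ> tu) + ybar)))))"

end

theory Submission
  imports Defs
begin

lemma prob_bind_pmf: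
  "measure_pmf.prob (bind_pmf M N) X = measure_pmf.expectation M (\<lambda>x. measure_pmf.prob (N x) X)"
  unfolding measure_pmf_bind
proof (rule measure_pmf.measure_bind[where N="count_space UNIV"])
  show "(\<lambda>x. measure_pmf (N x)) \<in> measure_pmf M \<rightarrow>\<^sub>M subprob_algebra (count_space UNIV)"
    using measurable_measure_pmf[of N] by (simp add: measurable_def)
qed auto

lemma expectation_finite:
  fixes M :: "'a::finite pmf"
  shows "measure_pmf.expectation M (g :: 'a \<Rightarrow> real) = (\<Sum>a\<in>UNIV. pmf M a * g a)"
  by (subst integral_measure_pmf_real[of UNIV]) (auto simp: mult.commute)

lemma seq_type_perm:
  fixes w :: "'k::finite \<Rightarrow> 'a"
  assumes "s permutes UNIV"
  shows "seq_type (w \<circ> s) = seq_type w"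
proof -
  have "card {i. w (s i) = a} = card {i. w i = a}" for a
  proof -
    have inj: "inj_on s {i. w (s i) = a}" using permutes_inj[OF assms] by (simp add: inj_on_def inj_def)
    have "s ` {i. w (s i) = a} = {i. w i = a}"
    proof
      show "s ` {i. w (s i) = a} \<subseteq> {i. w i = a}" by auto
      show "{i. w i = a} \<subseteq> s ` {i. w (s i) = a}"
      proof
        fix j assume "j \<in> {i. w i = a}"
        moreover have "s (inv s j) = j" using permutes_inverses(1)[OF assms] by simp
        ultimately show "j \<in> s ` {i. w (s i) = a}"
          by (metis (mono_tags, lifting) image_eqI mem_Collect_eq)
      qed
    qed
    then have "bij_betw s {i. w (s i) = a} {i. w i = a}" using inj by (simp add: bij_betw_def)
    then show ?thesis by (rule bij_betw_same_card)
  qed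
  then show ?thesis unfolding seq_type_def by auto
qed

lemma seq_type_eq_card:
  fixes w z :: "'k::finite \<Rightarrow> 'a"
  assumes "seq_type z = seq_type w"
  shows "card {i. z i = a} = card {i. w i = a}"
proof -
  have "real (card {i. z i = a}) / real CARD('k) = real (card {i. w i = a}) / real CARD('k)"
    using assms unfolding seq_type_def by metis
  then have "real (card {i. z i = a}) = real (card {i. w i = a})"
    unfolding divide_cancel_right by simp
  then show ?thesis by (simp only: of_nat_eq_iff)
qed

lemma exists_perm:
  fixes w z :: "'k::finite \<Rightarrow> 'a"
  assumes "seq_type z = seq_type w"
  shows "\<exists>s. s permutes UNIV \<and> w \<circ> s = z"
proof -
  have "\<forall>a. \<exists>h. bij_betw h {i. z i = a} {i. w i = a}"
  proof
    fix a show "\<exists>h. bij_betw h {i. z i = a} {i. w i = a}"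
      using seq_type_eq_card[OF assms, of a] by (intro finite_same_card_bij) auto
  qed
  from choice[OF this] obtain h where h: "\<And>a. bij_betw (h a) {i. z i = a} {i. w i = a}" by blast
  define s where "s i = h (z i) i" for i
  have ws: "w (s i) = z i" for i
  proof -
    have "h (z i) i \<in> {j. w j = z i}" by (rule bij_betw_apply[OF h]) simp
    then show ?thesis by (simp add: s_def)
  qed
  have "inj s"
  proof (rule injI)
    fix i j assume "s i = s j"
    then have "z i = z j" using ws by metis
    have "inj_on (h (z i)) {k. z k = z i}" using h bij_betw_imp_inj_on by blast
    moreover have "h (z i) i = h (z i) j" using \<open>s i = s j\<close> \<open>z i = z j\<close> by (simp add: s_def)
    ultimately show "i = j" using \<open>z i = z j\<close> by (auto dest: inj_onD)
  qed
  then have "bij s" using finite_UNIV_inj_surj[of s] by (simp add: bij_def)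
  then have "s permutes UNIV" using bij_imp_permutes[of s UNIV] by simp
  then show ?thesis using ws by (intro exI[of _ s]) auto
qed

lemma stab_card:
  fixes w :: "'k::finite \<Rightarrow> 'a::finite"
  shows "card {s. s permutes UNIV \<and> w \<circ> s = w} = (\<Prod>a\<in>UNIV. fact (card {i. w i = a}))"
proof -
  define B where "B a = {p. p permutes {i. w i = a}}" for a
  define Phi where "Phi ps = (\<lambda>i. ps (w i) i)" for ps :: "'a \<Rightarrow> 'k \<Rightarrow> 'k"
  define Psi where "Psi s = (\<lambda>a i. if w i = a then s i else i)" for s :: "'k \<Rightarrow> 'k"
  let ?S = "{s. s permutes UNIV \<and> w \<circ> s = w}"
  have "bij_betw Phi (PiE UNIV B) ?S"
  proof (rule bij_betwI[where g = Psi])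
    show "Phi \<in> PiE UNIV B \<rightarrow> ?S"
    proof
      fix ps assume ps: "ps \<in> PiE UNIV B"
      then have pa: "ps a permutes {i. w i = a}" for a by (auto simp: B_def)
      have ws: "w (Phi ps i) = w i" for i
        using permutes_in_image[OF pa[of "w i"], of i] by (simp add: Phi_def)
      have "inj (Phi ps)"
      proof (rule injI)
        fix i j assume e: "Phi ps i = Phi ps j"
        then have "w i = w j" using ws by metis
        then show "i = j" using e permutes_inj[OF pa[of "w i"]] unfolding Phi_def inj_def by auto
      qed
      then have "bij (Phi ps)" using finite_UNIV_inj_surj[of "Phi ps"] by (simp add: bij_def)
      then have "Phi ps permutes UNIV" using bij_imp_permutes[of "Phi ps" UNIV] by simp
      then show "Phi ps \<in> ?S" using ws by auto
    qed
    show "Psi \<in> ?S \<rightarrow> PiE UNIV B"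
    proof
      fix s assume s: "s \<in> ?S"
      then have sp: "s permutes UNIV" and ws: "\<And>i. w (s i) = w i"
        by (auto dest: fun_cong)
      have "Psi s a permutes {i. w i = a}" for a
      proof (rule bij_imp_permutes)
        have inj: "inj_on s {i. w i = a}" using permutes_inj[OF sp] by (auto simp: inj_on_def inj_def)
        have sub: "s ` {i. w i = a} \<subseteq> {i. w i = a}" using ws by auto
        have "card (s ` {i. w i = a}) = card {i. w i = a}" using inj by (simp add: card_image)
        then have "s ` {i. w i = a} = {i. w i = a}" using sub by (simp add: card_subset_eq)
        then have "bij_betw s {i. w i = a} {i. w i = a}" using inj by (simp add: bij_betw_def)
        then show "bij_betw (Psi s a) {i. w i = a} {i. w i = a}"
          by (rule bij_betw_cong[THEN iffD1, rotated]) (auto simp: Psi_def)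
        show "\<And>x. x \<notin> {i. w i = a} \<Longrightarrow> Psi s a x = x" by (auto simp: Psi_def)
      qed
      then show "Psi s \<in> PiE UNIV B" by (auto simp: B_def)
    qed
    show "Psi (Phi ps) = ps" if "ps \<in> PiE UNIV B" for ps
    proof -
      have pa: "ps a permutes {i. w i = a}" for a using that by (auto simp: B_def)
      show ?thesis
        by (rule ext, rule ext) (auto simp: Psi_def Phi_def permutes_not_in[OF pa])
    qed
    show "Phi (Psi s) = s" if "s \<in> ?S" for s
      by (auto simp: Psi_def Phi_def)
  qed
  then have "card ?S = card (PiE UNIV B)" by (simp add: bij_betw_same_card)
  also have "\<dots> = (\<Prod>a\<in>UNIV. card (B a))" by (simp add: card_PiE)
  also have "\<dots> = (\<Prod>a\<in>UNIV. fact (card {i. w i = a}))"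
    by (simp add: B_def card_permutations)
  finally show ?thesis .
qed

lemma orbit_card_eq:
  fixes w z :: "'k::finite \<Rightarrow> 'a"
  assumes "seq_type z = seq_type w"
  shows "card {s. s permutes UNIV \<and> w \<circ> s = z} = card {s. s permutes UNIV \<and> w \<circ> s = w}"
proof -
  obtain s0 where s0: "s0 permutes UNIV" "w \<circ> s0 = z" using exists_perm[OF assms] by blast
  have "bij_betw (\<lambda>s. s \<circ> s0) {s. s permutes UNIV \<and> w \<circ> s = w} {s. s permutes UNIV \<and> w \<circ> s = z}"
  proof (rule bij_betwI[where g = "\<lambda>t. t \<circ> inv s0"])
    show "(\<lambda>s. s \<circ> s0) \<in> {s. s permutes UNIV \<and> w \<circ> s = w} \<rightarrow> {s. s permutes UNIV \<and> w \<circ> s = z}"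
    proof
      fix s assume "s \<in> {s. s permutes UNIV \<and> w \<circ> s = w}"
      then have s: "s permutes UNIV" "w \<circ> s = w" by auto
      have "w \<circ> (s \<circ> s0) = (w \<circ> s) \<circ> s0" by (simp add: comp_assoc)
      then have "w \<circ> (s \<circ> s0) = z" using s s0 by simp
      moreover have "s \<circ> s0 permutes UNIV" using permutes_compose[OF s0(1) s(1)] .
      ultimately show "s \<circ> s0 \<in> {s. s permutes UNIV \<and> w \<circ> s = z}" by simp
    qed
    show "(\<lambda>t. t \<circ> inv s0) \<in> {s. s permutes UNIV \<and> w \<circ> s = z} \<rightarrow> {s. s permutes UNIV \<and> w \<circ> s = w}"
    proof
      fix t assume "t \<in> {s. s permutes UNIV \<and> w \<circ> s = z}"
      then have t: "t permutes UNIV" "w \<circ> t = z" by auto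
      have "w \<circ> (t \<circ> inv s0) = (w \<circ> t) \<circ> inv s0" by (simp add: comp_assoc)
      also have "\<dots> = w \<circ> (s0 \<circ> inv s0)" using t s0 by (metis comp_assoc)
      also have "\<dots> = w" using permutes_inv_o(1)[OF s0(1)] by simp
      finally have "w \<circ> (t \<circ> inv s0) = w" .
      moreover have "t \<circ> inv s0 permutes UNIV" using permutes_compose[OF permutes_inv[OF s0(1)] t(1)] .
      ultimately show "t \<circ> inv s0 \<in> {s. s permutes UNIV \<and> w \<circ> s = w}" by simp
    qed
    show "s \<circ> s0 \<circ> inv s0 = s" for s
      using permutes_inv_o(1)[OF s0(1)] by (simp add: comp_assoc)
    show "t \<circ> inv s0 \<circ> s0 = t" for t
      using permutes_inv_o(2)[OF s0(1)] by (simp add: comp_assoc)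
  qed
  then show ?thesis by (simp add: bij_betw_same_card)
qed

lemma orbit_empty:
  fixes w z :: "'k::finite \<Rightarrow> 'a"
  assumes "seq_type z \<noteq> seq_type w"
  shows "{s. s permutes UNIV \<and> w \<circ> s = z} = {}"
  using assms seq_type_perm by blast

lemma card_partition_fun:
  fixes g :: "'b \<Rightarrow> 'c::finite"
  assumes "finite A"
  shows "card A = (\<Sum>z\<in>UNIV. card {a\<in>A. g a = z})"
proof -
  have "card A = card (\<Union>z\<in>UNIV. {a\<in>A. g a = z})" by (rule arg_cong[of _ _ card]) auto
  also have "\<dots> = (\<Sum>z\<in>UNIV. card {a\<in>A. g a = z})"
    by (rule card_UN_disjoint) (auto simp: assms)
  finally show ?thesis .
qed

lemma orbit_count:
  fixes w :: "'k::finite \<Rightarrow> 'a::finite"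
  shows "fact CARD('k) = card {v::'k\<Rightarrow>'a. seq_type v = seq_type w} * card {s. s permutes UNIV \<and> w \<circ> s = w}"
proof -
  have "fact CARD('k) = card {s::'k\<Rightarrow>'k. s permutes UNIV}"
    by (simp add: card_permutations)
  also have "\<dots> = (\<Sum>z\<in>UNIV. card {s\<in>{s. s permutes UNIV}. w \<circ> s = z})"
    by (rule card_partition_fun) simp
  also have "\<dots> = (\<Sum>z::'k\<Rightarrow>'a\<in>UNIV. if seq_type z = seq_type w then card {s. s permutes UNIV \<and> w \<circ> s = w} else 0)"
    apply (intro sum.cong refl)
    subgoal for z using orbit_card_eq[of z w] orbit_empty[of z w] by auto
    done
  also have "\<dots> = card {v::'k\<Rightarrow>'a. seq_type v = seq_type w} * card {s. s permutes UNIV \<and> w \<circ> s = w}"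
    by (simp add: sum.If_cases)
  finally show ?thesis .
qed

lemma div_aux: "(c::real) > 0 \<Longrightarrow> F = N * c \<Longrightarrow> F / c = N" by simp
lemma div_aux2: "(c::real) > 0 \<Longrightarrow> F = N * c \<Longrightarrow> c / F = 1 / N" by simp

lemma fact_real_split:
  fixes w :: "'k::finite \<Rightarrow> 'a::finite"
  shows "(fact CARD('k) :: real) = real (card {v::'k\<Rightarrow>'a. seq_type v = seq_type w}) * real (card {s. s permutes UNIV \<and> w \<circ> s = w})"
proof -
  have "(fact CARD('k)::real) = real (fact CARD('k))" by (simp only: of_nat_fact)
  also have "\<dots> = real (card {v::'k\<Rightarrow>'a. seq_type v = seq_type w} * card {s. s permutes UNIV \<and> w \<circ> s = w})"
    by (simp only: orbit_count[of w])
  also have "\<dots> = real (card {v::'k\<Rightarrow>'a. seq_type v = seq_type w}) * real (card {s. s permutes UNIV \<and> w \<circ> s = w})"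
    by (simp only: of_nat_mult)
  finally show ?thesis .
qed

lemma multinom_eq:
  fixes w :: "'k::finite \<Rightarrow> 'a::finite"
  shows "multinom CARD('k) (seq_type w) = real (card {v::'k\<Rightarrow>'a. seq_type v = seq_type w})"
proof -
  have r: "nat (round (real CARD('k) * seq_type w a)) = card {i. w i = a}" for a
  proof -
    have "real CARD('k) * seq_type w a = real (card {i. w i = a})"
      unfolding seq_type_def by simp
    then show ?thesis by simp
  qed
  have pos: "card {s. s permutes UNIV \<and> w \<circ> s = w} > 0"
  proof -
    have "id \<in> {s. s permutes UNIV \<and> w \<circ> s = w}" by (simp add: permutes_id)
    moreover have "finite {s. s permutes UNIV \<and> w \<circ> s = w}" by simp
    ultimately show ?thesis using card_gt_0_iff by blast
  qed
  have "multinom CARD('k) (seq_type w) = fact CARD('k) / real (card {s. s permutes UNIV \<and> w \<circ> s = w})"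
  proof -
    have "real (card {s. s permutes UNIV \<and> w \<circ> s = w}) = (\<Prod>a\<in>UNIV. fact (card {i. w i = a}))"
      by (simp only: stab_card of_nat_prod of_nat_fact)
    then show ?thesis unfolding multinom_def r by (simp only:)
  qed
  also have "\<dots> = real (card {v::'k\<Rightarrow>'a. seq_type v = seq_type w})"
  proof -
    have "(fact CARD('k) :: real) = real (card {v::'k\<Rightarrow>'a. seq_type v = seq_type w}) * real (card {s. s permutes UNIV \<and> w \<circ> s = w})"
      by (rule fact_real_split)
    moreover have "real (card {s. s permutes UNIV \<and> w \<circ> s = w}) > 0" using pos by (simp only: of_nat_0_less_iff)
    ultimately show ?thesis by (intro div_aux)
  qed
  finally show ?thesis .
qed

lemma prob_perm:
  fixes w z :: "'k::finite \<Rightarrow> 'a::finite"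
  shows "real (card {s. s permutes UNIV \<and> w \<circ> s = z}) / fact CARD('k)
    = (if seq_type z = seq_type w then 1 / real (card {v::'k\<Rightarrow>'a. seq_type v = seq_type w}) else 0)"
proof (cases "seq_type z = seq_type w")
  case True
  have pos: "card {s. s permutes UNIV \<and> w \<circ> s = w} > 0"
  proof -
    have "id \<in> {s. s permutes UNIV \<and> w \<circ> s = w}" by (simp add: permutes_id)
    moreover have "finite {s. s permutes UNIV \<and> w \<circ> s = w}" by simp
    ultimately show ?thesis using card_gt_0_iff by blast
  qed
  have "(fact CARD('k) :: real) = real (card {v::'k\<Rightarrow>'a. seq_type v = seq_type w}) * real (card {s. s permutes UNIV \<and> w \<circ> s = w})"
    by (rule fact_real_split)
  moreover have "real (card {s. s permutes UNIV \<and> w \<circ> s = w}) > 0" using pos by (simp only: of_nat_0_less_iff)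
  ultimately show ?thesis using True orbit_card_eq[OF True] by (simp only: div_aux2 if_True simp_thms)
next
  case False
  then show ?thesis using orbit_empty[of z w] by simp
qed

lemma perms_ne: "{p::'k::finite \<Rightarrow> 'k. p permutes UNIV} \<noteq> {}"
  using permutes_id by blast

lemma card_perms: "card {p::'k::finite \<Rightarrow> 'k. p permutes UNIV} = fact CARD('k)"
  by (rule card_permutations) auto

lemma card_funs: "real (card (UNIV :: ('m::finite \<Rightarrow> 'y::finite) set)) = real CARD('y) ^ CARD('m)"
  by (simp add: card_fun)

lemma prob_randomize:
  fixes F :: "(('n::finite \<Rightarrow> 'x::finite) \<Rightarrow> ('m::finite \<Rightarrow> 'y::{finite,ab_group_add})) pmf"
  shows "measure_pmf.prob (randomize F) E =
    (\<Sum>f\<in>UNIV. pmf F f * ((\<Sum>sg\<in>{p. p permutes UNIV}. (\<Sum>tu\<in>{p. p permutes UNIV}.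
        (\<Sum>yb\<in>UNIV. indicator E (\<lambda>x. (f (x \<circ> sg) \<circ> tu) + yb)) / (real CARD('y) ^ CARD('m)))
          / fact CARD('m)) / fact CARD('n)))"
  unfolding randomize_def prob_bind_pmf measure_return_pmf
  unfolding integral_pmf_of_set[OF perms_ne finite] integral_pmf_of_set[OF UNIV_not_empty finite]
    card_perms card_funs
  unfolding expectation_finite
  by (simp add: of_nat_fact)

lemma sum_ind1:
  fixes h :: "'a \<Rightarrow> 'b::{finite,ab_group_add}"
  shows "(\<Sum>yb\<in>UNIV. indicator {g. g x1 = y1} (\<lambda>x. h x + yb)) = (1::real)"
proof -
  have "(\<Sum>yb\<in>UNIV. indicator {g. g x1 = y1} (\<lambda>x. h x + yb)) =
        (\<Sum>yb\<in>UNIV. if yb = y1 - h x1 then (1::real) else 0)"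
    by (intro sum.cong refl) (auto simp: indicator_def algebra_simps)
  also have "\<dots> = 1" by simp
  finally show ?thesis .
qed

lemma sum_ind2:
  fixes h :: "'a \<Rightarrow> 'b::{finite,ab_group_add}"
  shows "(\<Sum>yb\<in>UNIV. indicator {g. g x2 = y2 \<and> g x1 = y1} (\<lambda>x. h x + yb))
     = (if h x2 - h x1 = y2 - y1 then (1::real) else 0)"
proof -
  have "(\<Sum>yb\<in>UNIV. indicator {g. g x2 = y2 \<and> g x1 = y1} (\<lambda>x. h x + yb)) =
        (\<Sum>yb\<in>UNIV. if yb = y1 - h x1 then (if h x2 - h x1 = y2 - y1 then (1::real) else 0) else 0)"
    by (intro sum.cong refl) (auto simp: indicator_def algebra_simps)
  also have "\<dots> = (if h x2 - h x1 = y2 - y1 then (1::real) else 0)" by simp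
  finally show ?thesis .
qed

lemma hom_diff:
  assumes "is_additive_hom f"
  shows "f u - f v = f (u - v)"
proof -
  have "f u = f ((u - v) + v)" by simp
  also have "\<dots> = f (u - v) + f v" using assms unfolding is_additive_hom_def by blast
  finally show ?thesis by (simp add: algebra_simps)
qed

lemma sum_regroup:
  fixes g :: "'a \<Rightarrow> 'b::finite" and phi :: "'b \<Rightarrow> real"
  assumes "finite A"
  shows "(\<Sum>a\<in>A. phi (g a)) = (\<Sum>z\<in>UNIV. real (card {a\<in>A. g a = z}) * phi z)"
proof -
  have "(\<Sum>a\<in>A. phi (g a)) = (\<Sum>a\<in>A. \<Sum>z\<in>UNIV. if g a = z then phi z else 0)"
    by simp
  also have "\<dots> = (\<Sum>z\<in>UNIV. \<Sum>a\<in>A. if g a = z then phi z else 0)"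
    by (rule sum.swap)
  also have "\<dots> = (\<Sum>z\<in>UNIV. real (card {a\<in>A. g a = z}) * phi z)"
    using assms by (intro sum.cong refl) (simp add: sum.inter_filter[symmetric])
  finally show ?thesis .
qed

lemma comp_diff: "(a \<circ> t) - (b \<circ> t) = ((a - b) \<circ> t :: 'a \<Rightarrow> 'b::ab_group_add)"
  by (simp add: fun_eq_iff)

lemma sum_if_card: "finite A \<Longrightarrow> (\<Sum>x\<in>A. if P x then 1 else 0) = real (card {x\<in>A. P x})"
  by (simp add: sum.inter_filter[symmetric])

lemma div_swap: "(a::real) / b / c = a / c / b" by simp

lemma inner_tu:
  fixes g dy :: "'m::finite \<Rightarrow> 'y::finite"
  shows "(\<Sum>tu\<in>{p. p permutes UNIV}. (if g \<circ> tu = dy then 1 else 0) / (K::real)) / fact CARD('m)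
    = (if seq_type g = seq_type dy then 1 / real (card {v::'m\<Rightarrow>'y. seq_type v = seq_type dy}) else 0) / K"
proof -
  have "(\<Sum>tu\<in>{p. p permutes UNIV}. (if g \<circ> tu = dy then 1 else 0) / (K::real))
      = (\<Sum>tu\<in>{p. p permutes UNIV}. (if g \<circ> tu = dy then 1 else 0)) / K"
    by (simp add: sum_divide_distrib)
  also have "(\<Sum>tu\<in>{p. p permutes UNIV}. (if g \<circ> tu = dy then 1 else 0)) = real (card {tu. tu permutes UNIV \<and> g \<circ> tu = dy})"
    by (subst sum_if_card) (auto intro!: arg_cong[of _ _ "\<lambda>S. real (card S)"])
  finally have "(\<Sum>tu\<in>{p. p permutes UNIV}. (if g \<circ> tu = dy then 1 else 0) / (K::real)) / fact CARD('m)
     = (real (card {tu. tu permutes UNIV \<and> g \<circ> tu = dy}) / K) / fact CARD('m)"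
    by (simp only:)
  also have "\<dots> = (real (card {tu. tu permutes UNIV \<and> g \<circ> tu = dy}) / fact CARD('m)) / K"
    by (rule div_swap)
  also have "\<dots> = (if seq_type dy = seq_type g then 1 / real (card {v::'m\<Rightarrow>'y. seq_type v = seq_type g}) else 0) / K"
    by (simp only: prob_perm)
  also have "\<dots> = (if seq_type g = seq_type dy then 1 / real (card {v::'m\<Rightarrow>'y. seq_type v = seq_type dy}) else 0) / K"
    by auto
  finally show ?thesis .
qed

lemma inner_f:
  fixes f :: "('n::finite \<Rightarrow> 'x::{finite,ab_group_add}) \<Rightarrow> ('m::finite \<Rightarrow> 'y::{finite,ab_group_add})"
  assumes hom: "is_additive_hom f"
  shows "(\<Sum>sg\<in>{p. p permutes UNIV}. (\<Sum>tu\<in>{p. p permutes UNIV}.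
        (\<Sum>yb\<in>UNIV. indicator {g. g x2 = y2 \<and> g x1 = y1} (\<lambda>x. (f (x \<circ> sg) \<circ> tu) + yb)) / (K::real))
          / fact CARD('m)) / fact CARD('n)
   = real (card {z. seq_type z = seq_type (x2 - x1) \<and> seq_type (f z) = seq_type (y2 - y1)})
      / (real (card {v::'n\<Rightarrow>'x. seq_type v = seq_type (x2 - x1)}) * real (card {v::'m\<Rightarrow>'y. seq_type v = seq_type (y2 - y1)}) * K)"
proof -
  define dx where "dx = x2 - x1"
  define dy where "dy = y2 - y1"
  define Nx where "Nx = real (card {v::'n\<Rightarrow>'x. seq_type v = seq_type dx})"
  define Ny where "Ny = real (card {v::'m\<Rightarrow>'y. seq_type v = seq_type dy})"
  define psi where "psi g = (if seq_type g = seq_type dy then 1 / Ny else 0) / K" for g :: "'m \<Rightarrow> 'y"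
  have step1: "(\<Sum>yb\<in>UNIV. indicator {g. g x2 = y2 \<and> g x1 = y1} (\<lambda>x. (f (x \<circ> sg) \<circ> tu) + yb))
     = (if f (dx \<circ> sg) \<circ> tu = dy then (1::real) else 0)" for sg tu :: "_ \<Rightarrow> _"
  proof -
    have "(f (x2 \<circ> sg) \<circ> tu) - (f (x1 \<circ> sg) \<circ> tu) = f (dx \<circ> sg) \<circ> tu"
      unfolding comp_diff hom_diff[OF hom] dx_def ..
    then show ?thesis unfolding sum_ind2 dy_def by simp
  qed
  have step2: "(\<Sum>tu\<in>{p. p permutes UNIV}.
        (\<Sum>yb\<in>UNIV. indicator {g. g x2 = y2 \<and> g x1 = y1} (\<lambda>x. (f (x \<circ> sg) \<circ> tu) + yb)) / (K::real))
          / fact CARD('m) = psi (f (dx \<circ> sg))" for sg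
    unfolding step1 inner_tu psi_def Ny_def ..
  have "(\<Sum>sg\<in>{p. p permutes UNIV}. psi (f (dx \<circ> sg)))
     = (\<Sum>z\<in>UNIV. real (card {sg\<in>{p. p permutes UNIV}. dx \<circ> sg = z}) * psi (f z))"
    by (rule sum_regroup[where phi = "\<lambda>z. psi (f z)" and g = "\<lambda>sg. dx \<circ> sg"]) simp
  then have "(\<Sum>sg\<in>{p. p permutes UNIV}. psi (f (dx \<circ> sg))) / fact CARD('n)
     = (\<Sum>z\<in>UNIV. (real (card {sg. sg permutes UNIV \<and> dx \<circ> sg = z}) / fact CARD('n)) * psi (f z))"
    by (simp add: sum_divide_distrib)
  also have "\<dots> = (\<Sum>z\<in>UNIV. (if seq_type z = seq_type dx then 1 / Nx else 0) * psi (f z))"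
    unfolding prob_perm Nx_def ..
  also have "\<dots> = (\<Sum>z\<in>UNIV. if seq_type z = seq_type dx \<and> seq_type (f z) = seq_type dy then 1 / (Nx * Ny * K) else 0)"
    by (intro sum.cong refl) (simp add: psi_def)
  also have "\<dots> = real (card {z. seq_type z = seq_type dx \<and> seq_type (f z) = seq_type dy}) / (Nx * Ny * K)"
    by (simp add: sum.If_cases)
  finally show ?thesis unfolding step2 dx_def dy_def Nx_def Ny_def .
qed

lemma card_type_pos:
  fixes w :: "'k::finite \<Rightarrow> 'a::finite"
  shows "real (card {v::'k\<Rightarrow>'a. seq_type v = seq_type w}) > 0"
proof -
  have "w \<in> {v::'k\<Rightarrow>'a. seq_type v = seq_type w}" by simp
  moreover have "finite {v::'k\<Rightarrow>'a. seq_type v = seq_type w}" by simp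
  ultimately have "card {v::'k\<Rightarrow>'a. seq_type v = seq_type w} > 0" using card_gt_0_iff by blast
  then show ?thesis by simp
qed

theorem proposition5:
  fixes F :: "(('n::finite \<Rightarrow> 'x::{finite,ab_group_add}) \<Rightarrow> ('m::finite \<Rightarrow> 'y::{finite,ab_group_add})) pmf"
    and x1 x2 :: "'n \<Rightarrow> 'x" and y1 y2 :: "'m \<Rightarrow> 'y"
  assumes "\<forall>f \<in> set_pmf F. is_additive_hom f"
    and "x1 \<noteq> x2"
  shows "(measure_pmf.prob (randomize F) {g. g x1 = y1} = inverse (real CARD('y) ^ CARD('m)))
    \<and> (measure_pmf.prob (randomize F) {g. g x2 = y2 \<and> g x1 = y1}
           / measure_pmf.prob (randomize F) {g. g x1 = y1}
         = inverse (real CARD('y) ^ CARD('m)) * alpha F (seq_type (x2 - x1)) (seq_type (y2 - y1)))"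
proof -
  define K where "K = real CARD('y) ^ CARD('m)"
  define Xn where "Xn = real CARD('x) ^ CARD('n)"
  define Nx where "Nx = real (card {v::'n\<Rightarrow>'x. seq_type v = seq_type (x2 - x1)})"
  define Ny where "Ny = real (card {v::'m\<Rightarrow>'y. seq_type v = seq_type (y2 - y1)})"
  define cnt where "cnt f = real (card {z. seq_type z = seq_type (x2 - x1) \<and> seq_type (f z) = seq_type (y2 - y1)})"
    for f :: "('n \<Rightarrow> 'x) \<Rightarrow> ('m \<Rightarrow> 'y)"
  have Kpos: "K > 0" unfolding K_def by simp
  have Xpos: "Xn > 0" unfolding Xn_def by simp
  have Nxpos: "Nx > 0" unfolding Nx_def by (rule card_type_pos)
  have Nypos: "Ny > 0" unfolding Ny_def by (rule card_type_pos)
  have pmf_sum: "(\<Sum>f\<in>UNIV. pmf F f) = 1"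
    by (rule sum_pmf_eq_1) auto
  have P1: "measure_pmf.prob (randomize F) {g. g x1 = y1} = 1 / K"
  proof -
    have inner: "(\<Sum>sg\<in>{p. p permutes UNIV}. (\<Sum>tu\<in>{p. p permutes UNIV}.
        (\<Sum>yb\<in>UNIV. indicator {g. g x1 = y1} (\<lambda>x. (f (x \<circ> sg) \<circ> tu) + yb)) / K)
          / fact CARD('m)) / fact CARD('n) = 1 / K" for f :: "('n \<Rightarrow> 'x) \<Rightarrow> ('m \<Rightarrow> 'y)"
      unfolding sum_ind1 by (simp add: card_perms)
    have "measure_pmf.prob (randomize F) {g. g x1 = y1} = (\<Sum>f\<in>UNIV. pmf F f * (1 / K))"
      unfolding prob_randomize K_def[symmetric] inner ..
    also have "\<dots> = (\<Sum>f\<in>UNIV. pmf F f) * (1 / K)" by (rule sum_distrib_right[symmetric])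
    finally show ?thesis using pmf_sum by simp
  qed
  have P2: "measure_pmf.prob (randomize F) {g. g x2 = y2 \<and> g x1 = y1} = (\<Sum>f\<in>UNIV. pmf F f * cnt f) / (Nx * Ny * K)"
  proof -
    have "pmf F f * ((\<Sum>sg\<in>{p. p permutes UNIV}. (\<Sum>tu\<in>{p. p permutes UNIV}.
        (\<Sum>yb\<in>UNIV. indicator {g. g x2 = y2 \<and> g x1 = y1} (\<lambda>x. (f (x \<circ> sg) \<circ> tu) + yb)) / K)
          / fact CARD('m)) / fact CARD('n)) = pmf F f * cnt f / (Nx * Ny * K)"
      for f :: "('n \<Rightarrow> 'x) \<Rightarrow> ('m \<Rightarrow> 'y)"
    proof (cases "f \<in> set_pmf F")
      case True
      then have "is_additive_hom f" using assms(1) by blast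
      from inner_f[OF this, where K=K] show ?thesis
        unfolding cnt_def Nx_def Ny_def by (simp only: times_divide_eq_right)
    next
      case False
      then have "pmf F f = 0" by (simp add: set_pmf_iff)
      then show ?thesis by simp
    qed
    then have "measure_pmf.prob (randomize F) {g. g x2 = y2 \<and> g x1 = y1} = (\<Sum>f\<in>UNIV. pmf F f * cnt f / (Nx * Ny * K))"
      unfolding prob_randomize K_def[symmetric] by simp
    then show ?thesis by (simp add: sum_divide_distrib)
  qed
  have A: "alpha F (seq_type (x2 - x1)) (seq_type (y2 - y1)) = ((\<Sum>f\<in>UNIV. pmf F f * cnt f) / Xn) / (Nx * Ny * inverse Xn * inverse K)"
  proof -
    have "measure_pmf.expectation F (\<lambda>f. joint_spectrum f (seq_type (x2 - x1)) (seq_type (y2 - y1)))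
       = (\<Sum>f\<in>UNIV. pmf F f * (cnt f / Xn))"
      unfolding expectation_finite joint_spectrum_def cnt_def Xn_def ..
    also have "\<dots> = (\<Sum>f\<in>UNIV. pmf F f * cnt f) / Xn" by (simp add: sum_divide_distrib)
    finally show ?thesis unfolding alpha_def multinom_eq Nx_def Ny_def K_def Xn_def by simp
  qed
  show ?thesis
    unfolding K_def[symmetric] P1 P2 A using Kpos Xpos Nxpos Nypos
    by (simp add: field_simps)
qed

end
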